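(* Let $G$ be an abelian group and $E$ a real Banach space. Then $PJ(G;E)=\mathrm{Hom}(G;E)$.
   Context: $PJ(G;E)$ is the set of functions $f\colon G\to E$ such that there is $c>0$ with $\|f(xy)+f(xy^{-1})-2f(x)\|\le c$ for all $x,y\in G$ and $f(x^n)=nf(x)$ for all $x\in G$, $n\in\mathbb{Z}$. $\mathrm{Hom}(G;E)$ is the set of homomorphisms from $G$ to the additive group of $E$. *)

theory Defs
  imports "HOL-Analysis.Analysis"
begin

text \<open>The abelian group G is written additively (type class ab_group_add).
  zscale n x is the n-th power of x in G, i.e. n x for n an integer.\<close>

definition zscale :: "int \<Rightarrow> 'g::ab_group_add \<Rightarrow> 'g" where
  "zscale n x = (if 0 \<le> n then ((\<lambda>y. y + x) ^^ nat n) 0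
                 else - (((\<lambda>y. y + x) ^^ nat (- n)) 0))"

definition PJ :: "('g::ab_group_add \<Rightarrow> 'e::real_normed_vector) set" where
  "PJ = {f. (\<exists>c>0. \<forall>x y. norm (f (x + y) + f (x - y) - 2 *\<^sub>R f x) \<le> c)
            \<and> (\<forall>x. \<forall>n::int. f (zscale n x) = of_int n *\<^sub>R f x)}"

definition Hom :: "('g::ab_group_add \<Rightarrow> 'e::real_normed_vector) set" where
  "Hom = {f. \<forall>x y. f (x + y) = f x + f y}"

end

theory Submission
  imports Defs
begin

abbreviation it :: "nat \<Rightarrow> 'g::ab_group_add \<Rightarrow> 'g" where
  "it k x \<equiv> ((\<lambda>y. y + x) ^^ k) 0"

lemma it_add: "it k x + it k z = it k (x + z)"
  by (induction k) (auto simp: algebra_simps)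

lemma it_diff: "it k (x - z) = it k x - it k z"
  using it_add[of k "x - z" z] by (simp add: algebra_simps)

lemma zscale_nat: "zscale (int k) x = it k x"
  by (simp add: zscale_def)

lemma zscale_0: "zscale 0 x = 0"
  by (simp add: zscale_def)

lemma zscale_m1: "zscale (-1) x = - x"
  by (simp add: zscale_def)

lemma hom_it:
  assumes "\<forall>x y. f (x + y) = f x + (f y :: 'e::real_normed_vector)"
  shows "f (it k x) = real k *\<^sub>R f x"
proof (induction k)
  case 0
  have "f 0 = f 0 + f 0" using assms by (metis add.right_neutral)
  then show ?case by simp
next
  case (Suc k)
  then show ?case using assms by (simp add: algebra_simps)
qed

lemma hom_zscale:
  assumes "\<forall>x y. f (x + y) = f x + (f y :: 'e::real_normed_vector)"
  shows "f (zscale n x) = of_int n *\<^sub>R f x"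
proof (cases "0 \<le> n")
  case True
  then show ?thesis using hom_it[OF assms, of "nat n" x] by (simp add: zscale_def)
next
  case False
  have f0: "f 0 = 0" using assms by (metis add.right_neutral add_cancel_right_right)
  have neg: "f (- a) = - f a" for a
    using assms f0 by (metis add.right_inverse add_eq_0_iff2)
  show ?thesis using False hom_it[OF assms, of "nat (-n)" x] neg
    by (simp add: zscale_def)
qed

theorem corollary2p17:
  shows "(PJ :: ('g::ab_group_add \<Rightarrow> 'e::banach) set) = Hom"
proof
  show "Hom \<subseteq> (PJ :: ('g \<Rightarrow> 'e) set)"
  proof
    fix f :: "'g \<Rightarrow> 'e" assume "f \<in> Hom"
    then have A: "\<forall>x y. f (x + y) = f x + f y" by (simp add: Hom_def)
    have f0: "f 0 = 0" using A by (metis add.right_neutral add_cancel_right_right)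
    have neg: "f (- a) = - f a" for a
      using A f0 by (metis add.right_inverse add_eq_0_iff2)
    have "norm (f (x + y) + f (x - y) - 2 *\<^sub>R f x) \<le> 1" for x y
    proof -
      have "f (x - y) = f x - f y" using A neg by (metis diff_conv_add_uminus)
      then show ?thesis using A by (simp add: scaleR_2)
    qed
    then show "f \<in> PJ" unfolding PJ_def using hom_zscale[OF A] zero_less_one by blast
  qed
next
  show "(PJ :: ('g \<Rightarrow> 'e) set) \<subseteq> Hom"
  proof
    fix f :: "'g \<Rightarrow> 'e" assume "f \<in> PJ"
    then obtain c where c: "c > 0" "\<And>x y. norm (f (x + y) + f (x - y) - 2 *\<^sub>R f x) \<le> c"
      and H: "\<And>x n. f (zscale n x) = of_int n *\<^sub>R f x"
      unfolding PJ_def by blast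
    have f0: "f 0 = 0" using H[of 0 0] by (simp add: zscale_0)
    have neg: "f (- a) = - f a" for a using H[of "-1" a] by (simp add: zscale_m1)
    have D: "f (x + y) + f (x - y) - 2 *\<^sub>R f x = 0" for x y
    proof (rule ccontr)
      let ?D = "f (x + y) + f (x - y) - 2 *\<^sub>R f x"
      assume "?D \<noteq> 0"
      then have p: "norm ?D > 0" by simp
      obtain k :: nat where k: "c / norm ?D < real k" using reals_Archimedean2 by blast
      have "f (it k x + it k y) + f (it k x - it k y) - 2 *\<^sub>R f (it k x) = real k *\<^sub>R ?D"
      proof -
        have h: "f (it k z) = real k *\<^sub>R f z" for z
          using H[of "int k" z] unfolding zscale_nat by simp
        have "f (it k x + it k y) = real k *\<^sub>R f (x + y)" using h[of "x + y"] it_add[of k x y] by simp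
        moreover have "f (it k x - it k y) = real k *\<^sub>R f (x - y)" using h[of "x - y"] it_diff[of k x y] by simp
        ultimately show ?thesis using h[of x] by (simp add: algebra_simps)
      qed
      then have "norm (real k *\<^sub>R ?D) \<le> c" using c(2) by metis
      then have "real k * norm ?D \<le> c" by simp
      moreover have "c < real k * norm ?D" using k p by (simp add: field_simps)
      ultimately show False by simp
    qed
    have "f (x + y) = f x + f y" for x y
    proof -
      have 1: "f (x + y) + f (x - y) = 2 *\<^sub>R f x" using D[of x y] by simp
      have 2: "f (y + x) + f (y - x) = 2 *\<^sub>R f y" using D[of y x] by simp
      have "f (y - x) = - f (x - y)" using neg[of "x - y"] by simp
      then have 3: "f (x + y) - f (x - y) = 2 *\<^sub>R f y" using 2 by (simp add: add.commute)
      have "2 *\<^sub>R f (x + y) = (f (x + y) + f (x - y)) + (f (x + y) - f (x - y))"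
        by (simp add: scaleR_2)
      also have "\<dots> = 2 *\<^sub>R (f x + f y)" using 1 3 by (simp add: scaleR_right_distrib)
      finally have "2 *\<^sub>R f (x + y) = 2 *\<^sub>R (f x + f y)" .
      then show ?thesis by simp
    qed
    then show "f \<in> Hom" by (simp add: Hom_def)
  qed
qed

end
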